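(* Let $x \in \{\text{complete}, \text{stable}, \text{grounded}, \text{preferred}, \text{ideal}, \text{semi-stable}, \text{eager}\}$ and let $\sigma$ be either the semantics $\sigma_x$ itself (credulous mode) or its skeptical mode $\sigma_x^{\cap}$. Then there exist argumentation frameworks $AF=(AR,Attacks)$ and $AF'=(AR',Attacks')$ with $AF \preceq_N AF'$ such that the following statement does NOT hold: $$\forall E \in \sigma(AF)\ \exists E' \in \sigma(AF') \text{ such that } (E' \not\subseteq AR \ \lor\ E' = E).$$
   Context: An argumentation framework is a pair $AF=(AR,Attacks)$ where $AR$ is a finite set (of arguments) and $Attacks \subseteq AR \times AR$; $a$ attacks $b$ iff $(a,b)\in Attacks$, and a set $S$ attacks $b$ iff some element of $S$ attacks $b$. An argumentation semantics $\sigma$ assigns to each argumentation framework $AF$ a set $\sigma(AF)$ of subsets of $AR$ (the $\sigma$-extensions). $AF'=(AR',Attacks')$ is a normal expansion of $AF=(AR,Attacks)$, written $AF\preceq_N AF'$, iff $AR\subseteq AR'$, $Attacks\subseteq Attacks'$, and there is no $(a,b)\in Attacks'\setminus Attacks$ with both $a\in AR$ and $b\in AR$. A set $S\subseteq AR$ is conflict-free iff no element of $S$ attacks an element of $S$. An argument $a$ is acceptable w.r.t. $S$ iff every attacker of $a$ is attacked by $S$. A conflict-free $S$ is admissible iff every element of $S$ is acceptable w.r.t. $S$. The range of $S$ is $S\cup S^+$ where $S^+=\{b\in AR: \text{some } a\in S \text{ attacks } b\}$. For an admissible set $S$: $S$ is a stable extension iff $S$ attacks every argument not in $S$; a preferred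 extension iff $S$ is $\subseteq$-maximal among admissible sets; a complete extension iff every argument acceptable w.r.t. $S$ belongs to $S$; the grounded extension iff $S$ is the $\subseteq$-minimal complete extension; the ideal extension iff $S$ is the $\subseteq$-maximal admissible set contained in every preferred extension; a semi-stable extension iff $S$ is a complete extension whose range is $\subseteq$-maximal among ranges of complete extensions; the eager extension iff $S$ is the $\subseteq$-maximal admissible set contained in every semi-stable extension. $\sigma_x(AF)$ is the set of all $x$-extensions of $AF$. The skeptical mode is $\sigma^{\cap}(AF)=\{\bigcap_{E\in\sigma(AF)}E\}$, with the convention that $\sigma^{\cap}(AF)=\emptyset$ when $\sigma(AF)=\emptyset$. *)

theory Defs
  imports Main
begin

type_synonym 'a af = "'a set \<times> ('a \<times> 'a) set"

definition is_AF :: "'a af \<Rightarrow> bool" where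
  "is_AF AF \<longleftrightarrow> finite (fst AF) \<and> snd AF \<subseteq> fst AF \<times> fst AF"

definition normal_expansion :: "'a af \<Rightarrow> 'a af \<Rightarrow> bool" where
  "normal_expansion AF AF' \<longleftrightarrow>
     fst AF \<subseteq> fst AF' \<and> snd AF \<subseteq> snd AF' \<and>
     (\<forall>(a, b) \<in> snd AF' - snd AF. \<not> (a \<in> fst AF \<and> b \<in> fst AF))"

definition set_attacks :: "'a af \<Rightarrow> 'a set \<Rightarrow> 'a \<Rightarrow> bool" where
  "set_attacks AF S b \<longleftrightarrow> (\<exists>a\<in>S. (a, b) \<in> snd AF)"

definition conflict_free :: "'a af \<Rightarrow> 'a set \<Rightarrow> bool" where
  "conflict_free AF S \<longleftrightarrow> (\<forall>a\<in>S. \<forall>b\<in>S. (a, b) \<notin> snd AF)"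

definition acceptable :: "'a af \<Rightarrow> 'a set \<Rightarrow> 'a \<Rightarrow> bool" where
  "acceptable AF S a \<longleftrightarrow> (\<forall>b\<in>fst AF. (b, a) \<in> snd AF \<longrightarrow> set_attacks AF S b)"

definition admissible :: "'a af \<Rightarrow> 'a set \<Rightarrow> bool" where
  "admissible AF S \<longleftrightarrow> S \<subseteq> fst AF \<and> conflict_free AF S \<and> (\<forall>a\<in>S. acceptable AF S a)"

definition range_of :: "'a af \<Rightarrow> 'a set \<Rightarrow> 'a set" where
  "range_of AF S = S \<union> {b \<in> fst AF. set_attacks AF S b}"

definition stable_ext :: "'a af \<Rightarrow> 'a set \<Rightarrow> bool" where
  "stable_ext AF S \<longleftrightarrow> admissible AF S \<and> (\<forall>b\<in>fst AF - S. set_attacks AF S b)"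

definition preferred_ext :: "'a af \<Rightarrow> 'a set \<Rightarrow> bool" where
  "preferred_ext AF S \<longleftrightarrow> admissible AF S \<and> (\<forall>T. admissible AF T \<and> S \<subseteq> T \<longrightarrow> T = S)"

definition complete_ext :: "'a af \<Rightarrow> 'a set \<Rightarrow> bool" where
  "complete_ext AF S \<longleftrightarrow> admissible AF S \<and> (\<forall>a\<in>fst AF. acceptable AF S a \<longrightarrow> a \<in> S)"

definition grounded_ext :: "'a af \<Rightarrow> 'a set \<Rightarrow> bool" where
  "grounded_ext AF S \<longleftrightarrow> complete_ext AF S \<and> (\<forall>T. complete_ext AF T \<and> T \<subseteq> S \<longrightarrow> T = S)"

definition ideal_ext :: "'a af \<Rightarrow> 'a set \<Rightarrow> bool" where
  "ideal_ext AF S \<longleftrightarrow> admissible AF S \<and> (\<forall>P. preferred_ext AF P \<longrightarrow> S \<subseteq> P) \<and>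
     (\<forall>T. admissible AF T \<and> (\<forall>P. preferred_ext AF P \<longrightarrow> T \<subseteq> P) \<and> S \<subseteq> T \<longrightarrow> T = S)"

definition semi_stable_ext :: "'a af \<Rightarrow> 'a set \<Rightarrow> bool" where
  "semi_stable_ext AF S \<longleftrightarrow> complete_ext AF S \<and>
     (\<forall>T. complete_ext AF T \<and> range_of AF S \<subseteq> range_of AF T \<longrightarrow> range_of AF T = range_of AF S)"

definition eager_ext :: "'a af \<Rightarrow> 'a set \<Rightarrow> bool" where
  "eager_ext AF S \<longleftrightarrow> admissible AF S \<and> (\<forall>P. semi_stable_ext AF P \<longrightarrow> S \<subseteq> P) \<and>
     (\<forall>T. admissible AF T \<and> (\<forall>P. semi_stable_ext AF P \<longrightarrow> T \<subseteq> P) \<and> S \<subseteq> T \<longrightarrow> T = S)"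

datatype semantics = Complete | Stable | Grounded | Preferred | Ideal | SemiStable | Eager

datatype mode = Credulous | Skeptical

fun sigma :: "semantics \<Rightarrow> 'a af \<Rightarrow> 'a set set" where
  "sigma Complete AF = {S. complete_ext AF S}"
| "sigma Stable AF = {S. stable_ext AF S}"
| "sigma Grounded AF = {S. grounded_ext AF S}"
| "sigma Preferred AF = {S. preferred_ext AF S}"
| "sigma Ideal AF = {S. ideal_ext AF S}"
| "sigma SemiStable AF = {S. semi_stable_ext AF S}"
| "sigma Eager AF = {S. eager_ext AF S}"

definition skeptical :: "'a set set \<Rightarrow> 'a set set" where
  "skeptical Es = (if Es = {} then {} else {\<Inter> Es})"

fun sigma_mode :: "mode \<Rightarrow> semantics \<Rightarrow> 'a af \<Rightarrow> 'a set set" where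
  "sigma_mode Credulous x AF = sigma x AF"
| "sigma_mode Skeptical x AF = skeptical (sigma x AF)"

end

theory Submission
  imports Defs
begin

definition A1 :: "nat af" where "A1 = ({0}, {})"
definition A2 :: "nat af" where "A2 = ({0,1}, {(1,0),(1,1)})"

lemma adm1: "admissible A1 S \<longleftrightarrow> S \<subseteq> {0}"
  by (auto simp: A1_def admissible_def conflict_free_def acceptable_def)

lemma comp1: "complete_ext A1 S \<longleftrightarrow> S = {0}"
  unfolding complete_ext_def adm1 by (auto simp: A1_def acceptable_def)

lemma adm2: "admissible A2 S \<longleftrightarrow> S = {}"
proof
  assume a: "admissible A2 S"
  have "1 \<notin> S" using a by (auto simp: A2_def admissible_def conflict_free_def)
  moreover have "0 \<notin> S"
  proof
    assume "0 \<in> S"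
    then have "acceptable A2 S 0" using a by (auto simp: admissible_def)
    then have "set_attacks A2 S 1" by (auto simp: acceptable_def A2_def)
    then show False using a \<open>1 \<notin> S\<close> by (auto simp: set_attacks_def A2_def)
  qed
  moreover have "S \<subseteq> {0,1}" using a by (auto simp: admissible_def A2_def)
  ultimately show "S = {}" by auto
qed (auto simp: admissible_def conflict_free_def)

lemma comp2: "complete_ext A2 S \<longleftrightarrow> S = {}"
proof
  assume "S = {}"
  then show "complete_ext A2 S"
    unfolding complete_ext_def adm2 by (auto simp: acceptable_def A2_def set_attacks_def)
qed (auto simp: complete_ext_def adm2)

lemma st1: "stable_ext A1 S \<longleftrightarrow> S = {0}"
  unfolding stable_ext_def adm1 by (auto simp: A1_def set_attacks_def)

lemma gr1: "grounded_ext A1 S \<longleftrightarrow> S = {0}"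
  unfolding grounded_ext_def comp1 by blast

lemma pr1: "preferred_ext A1 S \<longleftrightarrow> S = {0}"
  unfolding preferred_ext_def adm1 by blast

lemma id1: "ideal_ext A1 S \<longleftrightarrow> S = {0}"
  unfolding ideal_ext_def pr1 adm1 by blast

lemma ss1: "semi_stable_ext A1 S \<longleftrightarrow> S = {0}"
  unfolding semi_stable_ext_def comp1 by blast

lemma ea1: "eager_ext A1 S \<longleftrightarrow> S = {0}"
  unfolding eager_ext_def ss1 adm1 by blast

lemma coll1: "(\<And>S. P S \<longleftrightarrow> S = a) \<Longrightarrow> Collect P = {a}"
  by blast

lemma coll2: "(\<And>S. P S \<Longrightarrow> S = a) \<Longrightarrow> Collect P \<subseteq> {a}"
  by blast

lemma sig1: "sigma x A1 = {{0}}"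
  apply (induct x)
  apply (simp only: sigma.simps; rule coll1; simp only: st1 gr1 pr1 id1 ss1 ea1 comp1)+
  done

lemma st2: "stable_ext A2 S \<Longrightarrow> S = {}"
proof -
  assume "stable_ext A2 S"
  then have "S = {}" "\<forall>b\<in>fst A2 - S. set_attacks A2 S b"
    unfolding stable_ext_def adm2 by auto
  then show ?thesis by (auto simp: A2_def set_attacks_def)
qed

lemma gr2: "grounded_ext A2 S \<Longrightarrow> S = {}"
  unfolding grounded_ext_def comp2 by blast

lemma pr2: "preferred_ext A2 S \<Longrightarrow> S = {}"
  unfolding preferred_ext_def adm2 by blast

lemma id2: "ideal_ext A2 S \<Longrightarrow> S = {}"
  unfolding ideal_ext_def adm2 by blast

lemma ss2: "semi_stable_ext A2 S \<Longrightarrow> S = {}"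
  unfolding semi_stable_ext_def comp2 by blast

lemma ea2: "eager_ext A2 S \<Longrightarrow> S = {}"
  unfolding eager_ext_def adm2 by blast

lemma sig2: "sigma x A2 \<subseteq> {{}}"
  apply (induct x)
  apply (simp only: sigma.simps; rule coll2; erule st2 gr2 pr2 id2 ss2 ea2 comp2[THEN iffD1])+
  done

theorem proposition37:
  fixes x :: semantics and m :: mode
  shows "\<exists>AF AF' :: nat af. is_AF AF \<and> is_AF AF' \<and> normal_expansion AF AF' \<and>
    \<not> (\<forall>E \<in> sigma_mode m x AF. \<exists>E' \<in> sigma_mode m x AF'. \<not> E' \<subseteq> fst AF \<or> E' = E)"
proof (intro exI conjI)
  show "is_AF A1" "is_AF A2" by (auto simp: is_AF_def A1_def A2_def)
  show "normal_expansion A1 A2" by (auto simp: normal_expansion_def A1_def A2_def)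
  have l: "sigma_mode m x A1 = {{0}}" using sig1[of x] by (cases m) (auto simp: skeptical_def)
  have r: "sigma_mode m x A2 \<subseteq> {{}}" using sig2[of x]
    by (cases m) (auto simp: skeptical_def)
  show "\<not> (\<forall>E \<in> sigma_mode m x A1. \<exists>E' \<in> sigma_mode m x A2. \<not> E' \<subseteq> fst A1 \<or> E' = E)"
    using l r by (auto simp: A1_def)
qed

end
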